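(* Let $\mathcal{P}=(\mathcal{R},\mathcal{F},\mathcal{D},\mathcal{B})$ be a ground Capacity Logic Program, let $W^{\mathcal{D}}_{\mathcal{P}}$ be its set of belief worlds and $\xi^{\mathcal{B}}:\mathbb{P}(W^{\mathcal{D}}_{\mathcal{P}})\to\mathbb{R}^2$ the capacity for sets of belief worlds. Then both $$(W^{\mathcal{D}}_{\mathcal{P}},\ \mathbb{P}(W^{\mathcal{D}}_{\mathcal{P}}),\ \mathrm{proj}_B\circ\xi^{\mathcal{B}})\quad\text{and}\quad (W^{\mathcal{D}}_{\mathcal{P}},\ \mathbb{P}(W^{\mathcal{D}}_{\mathcal{P}}),\ \mathrm{proj}_P\circ\xi^{\mathcal{B}})$$ are normalized capacity spaces; i.e. each of $\mathrm{proj}_B\circ\xi^{\mathcal{B}}$ and $\mathrm{proj}_P\circ\xi^{\mathcal{B}}$ is a capacity on $\mathbb{P}(W^{\mathcal{D}}_{\mathcal{P}})$ and takes the value $1$ on $W^{\mathcal{D}}_{\mathcal{P}}$.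
   Context: All sets are finite; there are no function symbols. Capacity: for a finite nonempty set $X$, a capacity is a function $\xi:\mathbb{P}(X)\to[0,1]$ with $\xi(\emptyset)=0$ and $A\subseteq B\Rightarrow \xi(A)\le\xi(B)$; it is normalized if $\xi(X)=1$. A (normalized) capacity space is a triple $(X,\mathbb{P}(X),\xi)$ with $\xi$ a (normalized) capacity. Belief domains: a belief domain $D$ has a finite nonempty frame of discernment $X_D$ and a mass function $\mathit{mass}(D,\cdot):\mathbb{P}(X_D)\to\mathbb{R}$ with $\mathit{mass}(D,\emptyset)=0$, $\mathit{mass}(D,A)\ge 0$ for all $A$, and $\sum_{A\subseteq X_D}\mathit{mass}(D,A)=1$. For $A\subseteq X_D$: $\mathit{Belief}(D,A)=\sum_{B\subseteq A}\mathit{mass}(D,B)$ and $\mathit{Plaus}(D,A)=1-\mathit{Belief}(D,X_D\setminus A)$. Subsets of $X_D$ are called belief events of $D$. Capacity Logic Program (CaLP): a tuple $\mathcal{P}=(\mathcal{R},\mathcal{F},\mathcal{D},\mathcal{B})$ where $\mathcal{R}$ is a finite set of ground rules, $\mathcal{F}$ is a finite set of ground probabilistic facts $p::f$ ($p\in[0,1]$, $f$ a ground atom), $\mathcal{D}$ is a finite set of belief domains, and $\mathcal{B}$ is the set of all ground belief facts $\mathit{belief}(D,B)$ with $D\in\mathcal{D}$ and $B\subseteq X_D$. A negated belief fact $\neg\,\mathit{belief}(D,B)$ is identified with $\mathit{belief}(D,X_D\setminus B)$, written $\mathit{belief}(D,\neg B)$. Canonicalization: for a set $Bel$ of belief facts,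 $\mathrm{doms}(Bel)$ is the set of domains occurring in it, and $\mathrm{canon}(Bel)=\{\mathit{belief}(D,\bigcap_{\mathit{belief}(D,B_i)\in Bel}B_i)\mid D\in\mathrm{doms}(Bel)\}$. $Bel$ is consistent if $\mathrm{canon}(Bel)$ contains no fact whose event is $\emptyset$. Belief worlds: a belief world of $\mathcal{P}$ is a tuple $w=(\mathcal{R},\mathcal{F}',\mathcal{D},\mathcal{B}')$ with $\mathcal{F}'\subseteq\mathcal{F}$ and $\mathcal{B}'\subseteq\mathcal{B}$ a consistent, canonical ($\mathrm{canon}(\mathcal{B}')=\mathcal{B}'$) set containing a belief fact for every domain in $\mathcal{D}$ (hence exactly one per domain). $W^{\mathcal{D}}_{\mathcal{P}}$ is the set of all belief worlds. Interval arithmetic: for nonnegative intervals, $[a,b]\,\widehat{\times}\,[c,d]=[ac,bd]$ and $[a,b]\,\widehat{+}\,[c,d]=[a+c,b+d]$; $\widehat{\prod}$ and $\widehat{\sum}$ are the iterated versions. Intervals are identified with elements of $\mathbb{R}^2$; $\mathrm{proj}_B([a,b])=a$ and $\mathrm{proj}_P([a,b])=b$. $\beta_{prb}$: for $\mathcal{F}'\subseteq\mathcal{F}$, $\beta_{prb}(\mathcal{F}')=\widehat{\prod}_{p::a\in\mathcal{F},\,a\in\mathcal{F}'}[p,p]\ \widehat{\times}\ \widehat{\prod}_{p::a\in\mathcal{F},\,a\notin\mathcal{F}'}[1-p,1-p]$. Upper belief domain probability: for a set $S$ of belief facts and a domain $D$, $BP^{\uparrow}(D,S)=[1,1]$ if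 $S$ contains no belief fact of domain $D$, and otherwise $BP^{\uparrow}(D,S)=[\mathit{Belief}(D,\bigcup B_i),\mathit{Plaus}(D,\bigcup B_i)]$ where the union ranges over all $B_i$ with $\mathit{belief}(D,B_i)\in S$. Capacity of sets of belief worlds: for $\mathcal{S}\subseteq W^{\mathcal{D}}_{\mathcal{P}}$, its domain partition $\mathrm{DomPrtn}(\mathcal{S})$ is the coarsest partition of $\mathcal{S}$ such that all worlds in a cell $S_i$ have the same set of probabilistic facts, denoted $\mathrm{probfacts}(S_i)$. For a cell $S_i$, $\beta_{prtn}(S_i)=\beta_{prb}(\mathrm{probfacts}(S_i))\ \widehat{\times}\ \widehat{\prod}_{D\in\mathcal{D}}BP^{\uparrow}\big(D,\bigcup_{(\mathcal{R},\mathcal{F}',\mathcal{D},\mathcal{B}')\in S_i}\mathcal{B}'\big)$ (so for each domain the belief events of that domain occurring in worlds of the cell are unioned), and $\xi^{\mathcal{B}}(\mathcal{S})=\widehat{\sum}_{S_i\in\mathrm{DomPrtn}(\mathcal{S})}\beta_{prtn}(S_i)$. *)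

theory Defs
  imports Complex_Main
begin

definition capacity :: "'w set \<Rightarrow> ('w set \<Rightarrow> real) \<Rightarrow> bool" where
  "capacity X \<xi> \<longleftrightarrow> finite X \<and> X \<noteq> {} \<and>
     (\<forall>A \<in> Pow X. 0 \<le> \<xi> A \<and> \<xi> A \<le> 1) \<and> \<xi> {} = 0 \<and>
     (\<forall>A B. A \<subseteq> B \<and> B \<subseteq> X \<longrightarrow> \<xi> A \<le> \<xi> B)"

definition normalized_capacity :: "'w set \<Rightarrow> ('w set \<Rightarrow> real) \<Rightarrow> bool" where
  "normalized_capacity X \<xi> \<longleftrightarrow> capacity X \<xi> \<and> \<xi> X = 1"

definition normalized_capacity_space :: "'w set \<Rightarrow> 'w set set \<Rightarrow> ('w set \<Rightarrow> real) \<Rightarrow> bool" where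
  "normalized_capacity_space X \<Sigma> \<xi> \<longleftrightarrow> \<Sigma> = Pow X \<and> normalized_capacity X \<xi>"

definition belief_domain :: "'x set \<Rightarrow> ('x set \<Rightarrow> real) \<Rightarrow> bool" where
  "belief_domain XD m \<longleftrightarrow> finite XD \<and> XD \<noteq> {} \<and> m {} = 0 \<and>
     (\<forall>A \<in> Pow XD. m A \<ge> 0) \<and> (\<Sum>A \<in> Pow XD. m A) = 1"

definition Belief :: "('x set \<Rightarrow> real) \<Rightarrow> 'x set \<Rightarrow> real" where
  "Belief m A = (\<Sum>B \<in> Pow A. m B)"

definition Plaus :: "'x set \<Rightarrow> ('x set \<Rightarrow> real) \<Rightarrow> 'x set \<Rightarrow> real" where
  "Plaus XD m A = 1 - Belief m (XD - A)"

text \<open>Probabilistic facts p::f are pairs (p, f); belief facts belief(D,B) are pairs (D, B).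
  A program is given by rules R, probabilistic facts F, domains Ds with frames X and masses mass.\<close>

definition calp :: "'r set \<Rightarrow> (real \<times> 'a) set \<Rightarrow> 'd set \<Rightarrow> ('d \<Rightarrow> 'x set)
    \<Rightarrow> ('d \<Rightarrow> 'x set \<Rightarrow> real) \<Rightarrow> bool" where
  "calp R F Ds X mass \<longleftrightarrow> finite R \<and> finite F \<and> (\<forall>(p, f) \<in> F. 0 \<le> p \<and> p \<le> 1) \<and>
     finite Ds \<and> (\<forall>D \<in> Ds. belief_domain (X D) (mass D))"

definition belief_facts :: "'d set \<Rightarrow> ('d \<Rightarrow> 'x set) \<Rightarrow> ('d \<times> 'x set) set" where
  "belief_facts Ds X = {(D, B). D \<in> Ds \<and> B \<subseteq> X D}"

definition doms :: "('d \<times> 'x set) set \<Rightarrow> 'd set" where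
  "doms Bel = fst ` Bel"

definition canon :: "('d \<times> 'x set) set \<Rightarrow> ('d \<times> 'x set) set" where
  "canon Bel = {(D, \<Inter>{B. (D, B) \<in> Bel}) | D. D \<in> doms Bel}"

definition consistent :: "('d \<times> 'x set) set \<Rightarrow> bool" where
  "consistent Bel \<longleftrightarrow> (\<forall>D. (D, {}) \<notin> canon Bel)"

type_synonym ('r, 'a, 'd, 'x) world =
  "'r set \<times> (real \<times> 'a) set \<times> 'd set \<times> ('d \<times> 'x set) set"

definition worlds :: "'r set \<Rightarrow> (real \<times> 'a) set \<Rightarrow> 'd set \<Rightarrow> ('d \<Rightarrow> 'x set)
    \<Rightarrow> ('r, 'a, 'd, 'x) world set" where
  "worlds R F Ds X = {(R, F', Ds, B') | F' B'. F' \<subseteq> F \<and> B' \<subseteq> belief_facts Ds X \<and>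
      consistent B' \<and> canon B' = B' \<and> (\<forall>D \<in> Ds. \<exists>B. (D, B) \<in> B')}"

definition wfacts :: "('r, 'a, 'd, 'x) world \<Rightarrow> (real \<times> 'a) set" where
  "wfacts w = fst (snd w)"

definition wbeliefs :: "('r, 'a, 'd, 'x) world \<Rightarrow> ('d \<times> 'x set) set" where
  "wbeliefs w = snd (snd (snd w))"

definition ivl_mult :: "real \<times> real \<Rightarrow> real \<times> real \<Rightarrow> real \<times> real" where
  "ivl_mult u v = (fst u * fst v, snd u * snd v)"

definition ivl_prod :: "('i \<Rightarrow> real \<times> real) \<Rightarrow> 'i set \<Rightarrow> real \<times> real" where
  "ivl_prod f S = ((\<Prod>i\<in>S. fst (f i)), (\<Prod>i\<in>S. snd (f i)))"

definition ivl_sum :: "('i \<Rightarrow> real \<times> real) \<Rightarrow> 'i set \<Rightarrow> real \<times> real" where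
  "ivl_sum f S = ((\<Sum>i\<in>S. fst (f i)), (\<Sum>i\<in>S. snd (f i)))"

definition proj_B :: "real \<times> real \<Rightarrow> real" where "proj_B u = fst u"
definition proj_P :: "real \<times> real \<Rightarrow> real" where "proj_P u = snd u"

definition beta_prb :: "(real \<times> 'a) set \<Rightarrow> (real \<times> 'a) set \<Rightarrow> real \<times> real" where
  "beta_prb F F' = ivl_mult
     (ivl_prod (\<lambda>(p, a). (p, p)) {(p, a) \<in> F. (p, a) \<in> F'})
     (ivl_prod (\<lambda>(p, a). (1 - p, 1 - p)) {(p, a) \<in> F. (p, a) \<notin> F'})"

definition BP_up :: "('d \<Rightarrow> 'x set) \<Rightarrow> ('d \<Rightarrow> 'x set \<Rightarrow> real) \<Rightarrow> 'd
    \<Rightarrow> ('d \<times> 'x set) set \<Rightarrow> real \<times> real" where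
  "BP_up X mass D S =
     (if \<not> (\<exists>B. (D, B) \<in> S) then (1, 1)
      else (let U = \<Union>{B. (D, B) \<in> S} in (Belief (mass D) U, Plaus (X D) (mass D) U)))"

definition DomPrtn :: "('r, 'a, 'd, 'x) world set \<Rightarrow> ('r, 'a, 'd, 'x) world set set" where
  "DomPrtn S = (\<lambda>F'. {w \<in> S. wfacts w = F'}) ` (wfacts ` S)"

definition cell_probfacts :: "('r, 'a, 'd, 'x) world set \<Rightarrow> (real \<times> 'a) set" where
  "cell_probfacts C = (THE F'. \<forall>w \<in> C. wfacts w = F')"

definition beta_prtn :: "(real \<times> 'a) set \<Rightarrow> 'd set \<Rightarrow> ('d \<Rightarrow> 'x set)
    \<Rightarrow> ('d \<Rightarrow> 'x set \<Rightarrow> real) \<Rightarrow> ('r, 'a, 'd, 'x) world set \<Rightarrow> real \<times> real" where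
  "beta_prtn F Ds X mass C = ivl_mult (beta_prb F (cell_probfacts C))
     (ivl_prod (\<lambda>D. BP_up X mass D (\<Union>w \<in> C. wbeliefs w)) Ds)"

definition xiB :: "(real \<times> 'a) set \<Rightarrow> 'd set \<Rightarrow> ('d \<Rightarrow> 'x set)
    \<Rightarrow> ('d \<Rightarrow> 'x set \<Rightarrow> real) \<Rightarrow> ('r, 'a, 'd, 'x) world set \<Rightarrow> real \<times> real" where
  "xiB F Ds X mass S = ivl_sum (beta_prtn F Ds X mass) (DomPrtn S)"

end

theory Submission
  imports Defs
begin

lemma sel_mult: "sel = fst \<or> sel = snd \<Longrightarrow> sel (ivl_mult u v) = sel u * sel v"
  by (auto simp: ivl_mult_def)

lemma sel_prod: "sel = fst \<or> sel = snd \<Longrightarrow> sel (ivl_prod f S) = (\<Prod>i\<in>S. sel (f i))"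
  by (auto simp: ivl_prod_def)

lemma sel_sum: "sel = fst \<or> sel = snd \<Longrightarrow> sel (ivl_sum f S) = (\<Sum>i\<in>S. sel (f i))"
  by (auto simp: ivl_sum_def)

lemma world_mem:
  assumes "w \<in> worlds R F Ds X"
  shows "wfacts w \<subseteq> F" "\<And>D. D \<in> Ds \<Longrightarrow> \<exists>B. (D, B) \<in> wbeliefs w"
    "\<And>D B. (D, B) \<in> wbeliefs w \<Longrightarrow> D \<in> Ds \<and> B \<subseteq> X D"
  using assms by (auto simp: worlds_def wfacts_def wbeliefs_def belief_facts_def)

lemma DomPrtn_sum:
  "(\<Sum>C\<in>DomPrtn S. h C) = (\<Sum>F'\<in>wfacts ` S. h {w \<in> S. wfacts w = F'})"
proof -
  have "inj_on (\<lambda>F'. {w \<in> S. wfacts w = F'}) (wfacts ` S)"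
  proof (rule inj_onI)
    fix x y assume "x \<in> wfacts ` S" "y \<in> wfacts ` S"
      and eq: "{w \<in> S. wfacts w = x} = {w \<in> S. wfacts w = y}"
    then obtain w where "w \<in> S" "wfacts w = x" by auto
    then have "w \<in> {w \<in> S. wfacts w = y}" using eq by blast
    then show "x = y" using \<open>wfacts w = x\<close> by auto
  qed
  then show ?thesis unfolding DomPrtn_def by (simp add: sum.reindex)
qed

lemma cell_pf:
  assumes "F' \<in> wfacts ` S"
  shows "cell_probfacts {w \<in> S. wfacts w = F'} = F'"
proof -
  from assms obtain w where "w \<in> S" "wfacts w = F'" by auto
  show ?thesis unfolding cell_probfacts_def
  proof (rule the_equality)
    show "\<forall>w\<in>{w \<in> S. wfacts w = F'}. wfacts w = F'" by auto
  next
    fix G assume "\<forall>w\<in>{w \<in> S. wfacts w = F'}. wfacts w = G"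
    then have "wfacts w = G" using \<open>w \<in> S\<close> \<open>wfacts w = F'\<close> by blast
    then show "G = F'" using \<open>wfacts w = F'\<close> by simp
  qed
qed

lemma xi_formula:
  assumes sel: "sel = fst \<or> sel = snd"
  shows "sel (xiB F Ds X mass S) = (\<Sum>F'\<in>wfacts ` S. sel (beta_prb F F') *
     (\<Prod>D\<in>Ds. sel (BP_up X mass D (\<Union>w\<in>{w \<in> S. wfacts w = F'}. wbeliefs w))))"
proof -
  have "sel (xiB F Ds X mass S) = (\<Sum>C\<in>DomPrtn S. sel (beta_prtn F Ds X mass C))"
    unfolding xiB_def by (rule sel_sum[OF sel])
  also have "\<dots> = (\<Sum>F'\<in>wfacts ` S. sel (beta_prtn F Ds X mass {w \<in> S. wfacts w = F'}))"
    by (rule DomPrtn_sum)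
  also have "\<dots> = (\<Sum>F'\<in>wfacts ` S. sel (beta_prb F F') *
     (\<Prod>D\<in>Ds. sel (BP_up X mass D (\<Union>w\<in>{w \<in> S. wfacts w = F'}. wbeliefs w))))"
    by (rule sum.cong) (auto simp: beta_prtn_def sel_mult[OF sel] sel_prod[OF sel] cell_pf)
  finally show ?thesis .
qed

lemma Belief_mono:
  assumes "belief_domain XD m" "A \<subseteq> B" "B \<subseteq> XD"
  shows "Belief m A \<le> Belief m B"
proof -
  have "finite XD" using assms(1) by (simp add: belief_domain_def)
  then have "finite B" using assms(3) finite_subset by blast
  show ?thesis unfolding Belief_def
    by (rule sum_mono2) (use \<open>finite B\<close> assms in \<open>auto simp: belief_domain_def\<close>)
qed

lemma Belief_nonneg:
  assumes "belief_domain XD m" "A \<subseteq> XD"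
  shows "0 \<le> Belief m A"
  unfolding Belief_def using assms by (auto simp: belief_domain_def intro!: sum_nonneg)

lemma Belief_full:
  assumes "belief_domain XD m"
  shows "Belief m XD = 1"
  using assms by (simp add: belief_domain_def Belief_def)

lemma BP_props:
  assumes bd: "belief_domain (X D) (mass D)" and sel: "sel = fst \<or> sel = snd"
    and ex: "\<exists>B. (D, B) \<in> S1" and sub: "S1 \<subseteq> S2"
    and inX: "\<And>B. (D, B) \<in> S2 \<Longrightarrow> B \<subseteq> X D"
  shows "0 \<le> sel (BP_up X mass D S1) \<and> sel (BP_up X mass D S1) \<le> sel (BP_up X mass D S2)"
proof -
  define U1 where "U1 = \<Union>{B. (D, B) \<in> S1}"
  define U2 where "U2 = \<Union>{B. (D, B) \<in> S2}"
  have ex2: "\<exists>B. (D, B) \<in> S2" using ex sub by blast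
  have U12: "U1 \<subseteq> U2" using sub unfolding U1_def U2_def by blast
  have U2X: "U2 \<subseteq> X D" using inX unfolding U2_def by blast
  have B1: "BP_up X mass D S1 = (Belief (mass D) U1, Plaus (X D) (mass D) U1)"
    using ex unfolding BP_up_def U1_def Let_def by simp
  have B2: "BP_up X mass D S2 = (Belief (mass D) U2, Plaus (X D) (mass D) U2)"
    using ex2 unfolding BP_up_def U2_def Let_def by simp
  have "0 \<le> Belief (mass D) U1" using Belief_nonneg[OF bd] U12 U2X by blast
  moreover have "Belief (mass D) U1 \<le> Belief (mass D) U2" using Belief_mono[OF bd U12 U2X] .
  moreover have "0 \<le> Plaus (X D) (mass D) U1"
    using Belief_mono[OF bd, of "X D - U1" "X D"] Belief_full[OF bd] by (simp add: Plaus_def)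
  moreover have "Plaus (X D) (mass D) U1 \<le> Plaus (X D) (mass D) U2"
    using Belief_mono[OF bd, of "X D - U2" "X D - U1"] U12 by (auto simp: Plaus_def)
  ultimately show ?thesis using sel B1 B2 by auto
qed

lemma calp_p: "calp R F Ds X mass \<Longrightarrow> (p, a) \<in> F \<Longrightarrow> 0 \<le> p \<and> p \<le> 1"
  unfolding calp_def by fast

lemma beta_prb_nonneg:
  assumes "calp R F Ds X mass" "sel = fst \<or> sel = snd"
  shows "0 \<le> sel (beta_prb F F')"
  using assms(2) calp_p[OF assms(1)] unfolding beta_prb_def ivl_mult_def ivl_prod_def
  by (auto intro!: prod_nonneg mult_nonneg_nonneg split: prod.splits)

lemma worlds_finite:
  assumes "calp R F Ds X mass"
  shows "finite (worlds R F Ds X)"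
proof -
  have fb: "finite (belief_facts Ds X)"
  proof -
    have "belief_facts Ds X \<subseteq> Sigma Ds (\<lambda>D. Pow (X D))"
      by (auto simp: belief_facts_def)
    moreover have "finite (Sigma Ds (\<lambda>D. Pow (X D)))"
      using assms by (auto simp: calp_def belief_domain_def intro!: finite_SigmaI)
    ultimately show ?thesis by (rule finite_subset)
  qed
  have "worlds R F Ds X \<subseteq> (\<lambda>(F', B'). (R, F', Ds, B')) ` (Pow F \<times> Pow (belief_facts Ds X))"
    by (auto simp: worlds_def)
  moreover have "finite (Pow F \<times> Pow (belief_facts Ds X))"
    using assms fb by (auto simp: calp_def)
  ultimately show ?thesis using finite_subset by blast
qed

lemma full_world:
  assumes "calp R F Ds X mass" "F' \<subseteq> F"
  shows "(R, F', Ds, (\<lambda>D. (D, X D)) ` Ds) \<in> worlds R F Ds X"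
proof -
  let ?B = "(\<lambda>D. (D, X D)) ` Ds"
  have ne: "\<And>D. D \<in> Ds \<Longrightarrow> X D \<noteq> {}"
    using assms(1) by (auto simp: calp_def belief_domain_def)
  have int: "\<And>D. D \<in> Ds \<Longrightarrow> \<Inter>{B. (D, B) \<in> ?B} = X D" by auto
  have d: "doms ?B = Ds" unfolding doms_def by (simp add: image_image)
  have c: "canon ?B = ?B"
  proof -
    have "canon ?B = {(D, \<Inter>{B. (D, B) \<in> ?B}) | D. D \<in> Ds}"
      unfolding canon_def d ..
    also have "\<dots> = {(D, X D) | D. D \<in> Ds}"
      using int by (intro Collect_cong) (metis (no_types, lifting))
    also have "\<dots> = ?B" by blast
    finally show ?thesis .
  qed
  have "consistent ?B" unfolding consistent_def c using ne by auto
  moreover have "?B \<subseteq> belief_facts Ds X" by (auto simp: belief_facts_def)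
  moreover have "\<forall>D \<in> Ds. \<exists>B. (D, B) \<in> ?B" by blast
  ultimately show ?thesis using c assms(2) unfolding worlds_def by blast
qed

lemma xi_mono:
  fixes R :: "'r set" and F :: "(real \<times> 'a) set" and Ds :: "'d set"
    and X :: "'d \<Rightarrow> 'x set" and mass :: "'d \<Rightarrow> 'x set \<Rightarrow> real"
    and S T :: "('r, 'a, 'd, 'x) world set"
  assumes calp: "calp R F Ds X mass" and sel: "sel = fst \<or> sel = snd"
    and ST: "S \<subseteq> T" and TW: "T \<subseteq> worlds R F Ds X"
  shows "sel (xiB F Ds X mass S) \<le> sel (xiB F Ds X mass T)"
proof -
  have finT: "finite T" using worlds_finite[OF calp] TW finite_subset by blast
  define P where "P = (\<lambda>(S :: ('r, 'a, 'd, 'x) world set) F'. (\<Prod>D\<in>Ds. sel (BP_up X mass D (\<Union>w\<in>{w \<in> S. wfacts w = F'}. wbeliefs w))))"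
  have bd: "\<And>D. D \<in> Ds \<Longrightarrow> belief_domain (X D) (mass D)" using calp by (auto simp: calp_def)
  have key: "0 \<le> P S' F' \<and> P S' F' \<le> P T F'" if ST': "S' \<subseteq> T" and inF: "F' \<in> wfacts ` S'" for S' F'
    unfolding P_def
  proof (rule conjI[OF prod_nonneg prod_mono])
    fix D assume D: "D \<in> Ds"
    obtain w where w: "w \<in> S'" "wfacts w = F'" using inF by auto
    have wW: "w \<in> worlds R F Ds X" using w ST' TW by blast
    have h: "0 \<le> sel (BP_up X mass D (\<Union>w\<in>{w \<in> S'. wfacts w = F'}. wbeliefs w)) \<and>
      sel (BP_up X mass D (\<Union>w\<in>{w \<in> S'. wfacts w = F'}. wbeliefs w))
      \<le> sel (BP_up X mass D (\<Union>w\<in>{w \<in> T. wfacts w = F'}. wbeliefs w))"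
    proof (rule BP_props[of X D mass, OF bd[OF D] sel])
      show "\<exists>B. (D, B) \<in> (\<Union>w\<in>{w \<in> S'. wfacts w = F'}. wbeliefs w)"
        using world_mem(2)[OF wW D] w by blast
      show "(\<Union>w\<in>{w \<in> S'. wfacts w = F'}. wbeliefs w) \<subseteq> (\<Union>w\<in>{w \<in> T. wfacts w = F'}. wbeliefs w)"
        using ST' by blast
      fix B assume "(D, B) \<in> (\<Union>w\<in>{w \<in> T. wfacts w = F'}. wbeliefs w)"
      then obtain v where "v \<in> T" "(D, B) \<in> wbeliefs v" by blast
      then show "B \<subseteq> X D" using world_mem(3)[of v] TW by blast
    qed
    then show "0 \<le> sel (BP_up X mass D (\<Union>w\<in>{w \<in> S'. wfacts w = F'}. wbeliefs w))" by simp
    show "0 \<le> sel (BP_up X mass D (\<Union>w\<in>{w \<in> S'. wfacts w = F'}. wbeliefs w)) \<and>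
      sel (BP_up X mass D (\<Union>w\<in>{w \<in> S'. wfacts w = F'}. wbeliefs w))
      \<le> sel (BP_up X mass D (\<Union>w\<in>{w \<in> T. wfacts w = F'}. wbeliefs w))" using h .
  qed
  have "sel (xiB F Ds X mass S) = (\<Sum>F'\<in>wfacts ` S. sel (beta_prb F F') * P S F')"
    unfolding P_def by (rule xi_formula[OF sel])
  also have "\<dots> \<le> (\<Sum>F'\<in>wfacts ` S. sel (beta_prb F F') * P T F')"
    by (rule sum_mono, rule mult_left_mono) (use key ST beta_prb_nonneg[OF calp sel] in auto)
  also have "\<dots> \<le> (\<Sum>F'\<in>wfacts ` T. sel (beta_prb F F') * P T F')"
    by (rule sum_mono2) (use finT ST key[of T] beta_prb_nonneg[OF calp sel] in auto)
  also have "\<dots> = sel (xiB F Ds X mass T)"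
    unfolding P_def by (rule xi_formula[OF sel, symmetric])
  finally show ?thesis .
qed

lemma beta_prb_eq:
  assumes "F' \<subseteq> F" "sel = fst \<or> sel = snd"
  shows "sel (beta_prb F F') = (\<Prod>x\<in>F'. fst x) * (\<Prod>x\<in>F - F'. 1 - fst x)"
proof -
  have e1: "{(p, a) \<in> F. (p, a) \<in> F'} = F'" using assms(1) by auto
  have e2: "{(p, a) \<in> F. (p, a) \<notin> F'} = F - F'" by auto
  have p1: "(\<Prod>x\<in>F'. sel ((\<lambda>(p, a). (p, p)) x)) = (\<Prod>x\<in>F'. fst x)"
    by (rule prod.cong) (use assms(2) in auto)
  have p2: "(\<Prod>x\<in>F - F'. sel ((\<lambda>(p, a). (1 - p, 1 - p)) x)) = (\<Prod>x\<in>F - F'. 1 - fst x)"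
    by (rule prod.cong) (use assms(2) in auto)
  show ?thesis unfolding beta_prb_def sel_mult[OF assms(2)] sel_prod[OF assms(2)] e1 e2 p1 p2 ..
qed

lemma xi_W:
  fixes R :: "'r set" and F :: "(real \<times> 'a) set" and Ds :: "'d set"
    and X :: "'d \<Rightarrow> 'x set" and mass :: "'d \<Rightarrow> 'x set \<Rightarrow> real"
  assumes calp: "calp R F Ds X mass" and sel: "sel = fst \<or> sel = snd"
  shows "sel (xiB F Ds X mass (worlds R F Ds X)) = 1"
proof -
  let ?W = "worlds R F Ds X"
  have finF: "finite F" using calp by (simp add: calp_def)
  have bd: "\<And>D. D \<in> Ds \<Longrightarrow> belief_domain (X D) (mass D)" using calp by (auto simp: calp_def)
  have wf: "wfacts ` ?W = Pow F"
  proof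
    show "wfacts ` ?W \<subseteq> Pow F" using world_mem(1) by blast
    show "Pow F \<subseteq> wfacts ` ?W"
    proof
      fix F' assume "F' \<in> Pow F"
      then have "(R, F', Ds, (\<lambda>D. (D, X D)) ` Ds) \<in> ?W" using full_world[OF calp] by blast
      then show "F' \<in> wfacts ` ?W" by (force simp: wfacts_def)
    qed
  qed
  have bp: "sel (BP_up X mass D (\<Union>w\<in>{w \<in> ?W. wfacts w = F'}. wbeliefs w)) = 1"
    if F': "F' \<subseteq> F" and D: "D \<in> Ds" for F' D
  proof -
    let ?U = "\<Union>w\<in>{w \<in> ?W. wfacts w = F'}. wbeliefs w"
    have fw: "(R, F', Ds, (\<lambda>D. (D, X D)) ` Ds) \<in> {w \<in> ?W. wfacts w = F'}"
      using full_world[OF calp F'] by (simp add: wfacts_def)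
    have inU: "(D, X D) \<in> ?U"
    proof -
      have "(D, X D) \<in> wbeliefs (R, F', Ds, (\<lambda>D. (D, X D)) ` Ds)" using D by (simp add: wbeliefs_def)
      then show ?thesis using fw by blast
    qed
    have un: "\<Union>{B. (D, B) \<in> ?U} = X D"
    proof
      show "\<Union>{B. (D, B) \<in> ?U} \<subseteq> X D"
      proof
        fix x assume "x \<in> \<Union>{B. (D, B) \<in> ?U}"
        then obtain B w where "x \<in> B" "w \<in> ?W" "(D, B) \<in> wbeliefs w" by blast
        then show "x \<in> X D" using world_mem(3)[of w R F Ds X D B] by blast
      qed
      show "X D \<subseteq> \<Union>{B. (D, B) \<in> ?U}" using inU by blast
    qed
    have ex: "\<exists>B. (D, B) \<in> ?U" using inU by blast
    have "BP_up X mass D ?U = (Belief (mass D) (X D), Plaus (X D) (mass D) (X D))"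
      unfolding BP_up_def Let_def un using ex by simp
    moreover have "Belief (mass D) (X D) = 1" using Belief_full[OF bd[OF D]] .
    moreover have "Plaus (X D) (mass D) (X D) = 1"
      using bd[OF D] by (simp add: Plaus_def Belief_def belief_domain_def)
    ultimately show ?thesis using sel by auto
  qed
  have "sel (xiB F Ds X mass ?W) = (\<Sum>F'\<in>Pow F. sel (beta_prb F F') *
     (\<Prod>D\<in>Ds. sel (BP_up X mass D (\<Union>w\<in>{w \<in> ?W. wfacts w = F'}. wbeliefs w))))"
    using xi_formula[OF sel, of F Ds X mass ?W] unfolding wf .
  also have "\<dots> = (\<Sum>F'\<in>Pow F. (\<Prod>x\<in>F'. fst x) * (\<Prod>x\<in>F - F'. 1 - fst x))"
    by (rule sum.cong) (auto simp: bp beta_prb_eq[OF _ sel])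
  also have "\<dots> = (\<Prod>x\<in>F. fst x + (1 - fst x))"
    by (rule prod_add[OF finF, symmetric])
  also have "\<dots> = 1" by simp
  finally show ?thesis .
qed

lemma DomPrtn_empty: "DomPrtn {} = {}"
  unfolding DomPrtn_def by (simp only: image_empty)

lemma xi_empty0: "xiB F Ds X mass {} = (0, 0)"
  unfolding xiB_def ivl_sum_def DomPrtn_empty by (simp only: sum.empty)

lemma xi_empty: "sel = fst \<or> sel = snd \<Longrightarrow> sel (xiB F Ds X mass {}) = 0"
  unfolding xi_empty0 by (elim disjE) simp_all

lemma sel_capacity:
  fixes R :: "'r set" and F :: "(real \<times> 'a) set" and Ds :: "'d set"
    and X :: "'d \<Rightarrow> 'x set" and mass :: "'d \<Rightarrow> 'x set \<Rightarrow> real"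
  assumes calp: "calp R F Ds X mass" and sel: "sel = fst \<or> sel = snd"
  shows "normalized_capacity_space (worlds R F Ds X) (Pow (worlds R F Ds X))
            (sel \<circ> xiB F Ds X mass)"
proof -
  let ?W = "worlds R F Ds X"
  let ?f = "sel \<circ> (xiB F Ds X mass :: ('r, 'a, 'd, 'x) world set \<Rightarrow> real \<times> real)"
  have mem: "(R, {}, Ds, (\<lambda>D. (D, X D)) ` Ds) \<in> ?W" by (rule full_world[OF calp]) simp
  have ne: "?W \<noteq> {}" using mem by (rule ex_in_conv[THEN iffD1, OF exI])
  have W1: "?f ?W = 1" unfolding o_apply by (rule xi_W[OF calp sel])
  have z: "?f {} = 0" unfolding o_apply by (rule xi_empty[OF sel])
  have monof: "?f A \<le> ?f B" if "A \<subseteq> B" "B \<subseteq> ?W" for A B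
    unfolding o_apply by (rule xi_mono[OF calp sel that])
  have bnd: "0 \<le> ?f A \<and> ?f A \<le> 1" if "A \<in> Pow ?W" for A
  proof -
    have AW: "A \<subseteq> ?W" using that by (rule PowD)
    have "?f {} \<le> ?f A" using monof[of "{}" A] AW by blast
    moreover have "?f A \<le> ?f ?W" using monof[of A ?W] AW by blast
    ultimately show ?thesis using z W1 by linarith
  qed
  have "capacity ?W ?f"
    unfolding capacity_def
  proof (intro conjI ballI allI impI)
    show "finite ?W" by (rule worlds_finite[OF calp])
    show "?W \<noteq> {}" by (rule ne)
    show "?f {} = 0" by (rule z)
  next
    fix A assume "A \<in> Pow ?W" then show "0 \<le> ?f A" using bnd by blast
  next
    fix A assume "A \<in> Pow ?W" then show "?f A \<le> 1" using bnd by blast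
  next
    fix A B assume "A \<subseteq> B \<and> B \<subseteq> ?W" then show "?f A \<le> ?f B" using monof by blast
  qed
  then show ?thesis unfolding normalized_capacity_space_def normalized_capacity_def
    using W1 by blast
qed

theorem mainTheorem1:
  fixes R :: "'r set" and F :: "(real \<times> 'a) set" and Ds :: "'d set"
    and X :: "'d \<Rightarrow> 'x set" and mass :: "'d \<Rightarrow> 'x set \<Rightarrow> real"
  assumes "calp R F Ds X mass"
  shows "normalized_capacity_space (worlds R F Ds X) (Pow (worlds R F Ds X))
            (proj_B \<circ> xiB F Ds X mass)
       \<and> normalized_capacity_space (worlds R F Ds X) (Pow (worlds R F Ds X))
            (proj_P \<circ> xiB F Ds X mass)"
proof -
  have b: "proj_B = fst" by (rule ext) (simp add: proj_B_def)
  have p: "proj_P = snd" by (rule ext) (simp add: proj_P_def)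
  show ?thesis unfolding b p using sel_capacity[OF assms] by blast
qed

end
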